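(* Let $D\in\mathbb{N}$, let $\mathcal{X}\subset\mathbb{R}^D$ be compact, set $d_0(x,y)=|x-y|\wedge1$ for $x,y\in\mathcal{X}$, and let $1\le p<\infty$. Define $f:\mathfrak{N}\to[0,1]$ by $$f(\xi)=\Big(\frac1n\sum_{i=1}^n\min_{j\in\{1,\dots,n\},\,j\ne i}d_0(x_i,x_j)^p\Big)^{1/p}$$ for $\xi=\sum_{i=1}^n\delta_{x_i}$ with $n\ge2$, and $f(\xi)=0$ if $|\xi|<2$. Then $f$ is Lipschitz continuous with respect to $d_1^{(p)}$, with Lipschitz constant $\tau_D+1$ if $p=1$ and $2(2\tau_D+1)^{1/p}$ for general $p$.
   Context: $|\cdot|$ is the Euclidean norm; $\mathfrak{N}$ is the space of finite point measures on $\mathcal{X}$ and $|\xi|$ the total mass of $\xi$. $\Pi_n$ is the set of permutations of $\{1,\dots,n\}$. For $\xi=\sum_{i=1}^{|\xi|}\delta_{x_i}$, $\eta=\sum_{i=1}^{|\eta|}\delta_{y_i}$: $d_1^{(p)}(\xi,\eta)=\min_{\pi\in\Pi_n}\big(\frac1n\sum_{i=1}^n d_0(x_i,y_{\pi(i)})^p\big)^{1/p}$ if $|\xi|=|\eta|=n\ge1$, $=1$ if $|\xi|\ne|\eta|$, $=0$ if $|\xi|=|\eta|=0$. $\tau_D$ is the kissing number in dimension $D$: the maximal number of unit balls in $(\mathbb{R}^D,|\cdot|)$ that can touch a given unit ball without overlapping interiors. *)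

theory Defs
  imports "HOL-Analysis.Analysis" "HOL-Library.Multiset"
begin

definition kissing_number :: "'a::euclidean_space itself \<Rightarrow> nat" where
  "kissing_number _ = (GREATEST k. \<exists>C::'a set. finite C \<and> card C = k \<and>
      (\<forall>c\<in>C. cball c 1 \<inter> cball 0 1 \<noteq> {} \<and> ball c 1 \<inter> ball 0 1 = {}) \<and>
      (\<forall>c\<in>C. \<forall>c'\<in>C. c \<noteq> c' \<longrightarrow> ball c 1 \<inter> ball c' 1 = {}))"

definition d0 :: "'a::real_normed_vector \<Rightarrow> 'a \<Rightarrow> real" where
  "d0 x y = min (norm (x - y)) 1"

text \<open>Finite point measures are represented as multisets of points.
  d_1^(p): minimum over all matchings. Enumerating xi and eta as lists xs, ys
  (in all possible orders) and pairing xs!i with ys!i covers exactly all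
  permutations pi in the paper's definition.\<close>
definition d1 :: "real \<Rightarrow> 'a::real_normed_vector multiset \<Rightarrow> 'a multiset \<Rightarrow> real" where
  "d1 p \<xi> \<eta> =
     (if size \<xi> \<noteq> size \<eta> then 1
      else if size \<xi> = 0 then 0
      else Min {((1 / real (size \<xi>)) * (\<Sum>i<size \<xi>. d0 (xs ! i) (ys ! i) powr p)) powr (1 / p)
                 | xs ys. mset xs = \<xi> \<and> mset ys = \<eta>})"

definition nn_stat :: "real \<Rightarrow> 'a::real_normed_vector multiset \<Rightarrow> real" where
  "nn_stat p \<xi> =
     (if size \<xi> < 2 then 0
      else ((1 / real (size \<xi>)) *
             (\<Sum>x\<in>#\<xi>. Min ((\<lambda>y. d0 x y powr p) ` set_mset (\<xi> - {#x#})))) powr (1 / p))"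

end

theory Submission
  imports Defs
begin


lemma unit_sep:
  fixes a b :: "'a::real_inner"
  assumes "a \<noteq> 0" "b \<noteq> 0" "norm a \<le> norm (a - b)" "norm b \<le> norm (a - b)"
  shows "1 \<le> norm (a /\<^sub>R norm a - b /\<^sub>R norm b)"
proof -
  have na: "norm a > 0" "norm b > 0" using assms by auto
  have e1: "(norm (a - b))^2 = (norm a)^2 + (norm b)^2 - 2 * (a \<bullet> b)"
    by (simp add: power2_norm_eq_inner inner_diff algebra_simps inner_commute)
  have h1: "2 * (a \<bullet> b) \<le> (norm b)^2" using assms(3) e1
    by (smt (verit) norm_ge_zero power_mono)
  have h2: "2 * (a \<bullet> b) \<le> (norm a)^2" using assms(4) e1
    by (smt (verit) norm_ge_zero power_mono)
  have h3: "2 * (a \<bullet> b) \<le> norm a * norm b"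
  proof (cases "norm a \<le> norm b")
    case True
    then have "(norm a)^2 \<le> norm a * norm b" using na by (simp add: power2_eq_square)
    then show ?thesis using h2 by linarith
  next
    case False
    then have "(norm b)^2 \<le> norm a * norm b" using na by (simp add: power2_eq_square)
    then show ?thesis using h1 by linarith
  qed
  define u where "u = a /\<^sub>R norm a"
  define v where "v = b /\<^sub>R norm b"
  have uu: "u \<bullet> u = 1" "v \<bullet> v = 1" using na unfolding u_def v_def
    by (simp_all add: power2_norm_eq_inner[symmetric] power2_eq_square)
  have uv: "u \<bullet> v = (a \<bullet> b) / (norm a * norm b)" unfolding u_def v_def
    by (simp add: field_simps)
  have "(norm (a /\<^sub>R norm a - b /\<^sub>R norm b))^2 = 2 - 2 * (a \<bullet> b) / (norm a * norm b)"
    unfolding u_def[symmetric] v_def[symmetric] power2_norm_eq_inner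
    using uu uv by (simp add: inner_diff inner_commute)
  also have "\<dots> \<ge> 1" using h3 na by (simp add: divide_simps)
  finally have "1\<^sup>2 \<le> (norm (a /\<^sub>R norm a - b /\<^sub>R norm b))^2" by simp
  then show ?thesis
    by (rule power2_le_imp_le) simp
qed



lemma packing_bound:
  "\<exists>N::nat. \<forall>C::'a::euclidean_space set. C \<subseteq> cball 0 2 \<and>
      (\<forall>c\<in>C. \<forall>c'\<in>C. c \<noteq> c' \<longrightarrow> 2 \<le> dist c c') \<longrightarrow> card C \<le> N"
proof -
  have "compact (cball (0::'a) 2)" by simp
  then obtain K where K: "K \<subseteq> cball 0 2" "finite K" "cball (0::'a) 2 \<subseteq> (\<Union>x\<in>K. ball x 1)"
    by (rule compactE_image[where C="cball 0 2" and f="\<lambda>x. ball x 1"]) auto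
  show ?thesis
  proof (intro exI allI impI)
    fix C :: "'a set"
    assume C: "C \<subseteq> cball 0 2 \<and> (\<forall>c\<in>C. \<forall>c'\<in>C. c \<noteq> c' \<longrightarrow> 2 \<le> dist c c')"
    define g where "g c = (SOME x. x \<in> K \<and> c \<in> ball x 1)" for c
    have g: "g c \<in> K \<and> c \<in> ball (g c) 1" if "c \<in> C" for c
    proof -
      have "\<exists>x. x \<in> K \<and> c \<in> ball x 1" using that C K(3) by blast
      then show ?thesis unfolding g_def by (rule someI_ex)
    qed
    have "inj_on g C"
    proof (rule inj_onI)
      fix c c' assume cc: "c \<in> C" "c' \<in> C" "g c = g c'"
      have "dist c c' \<le> dist c (g c) + dist (g c) c'" by (rule dist_triangle)
      also have "\<dots> < 2" using g[OF cc(1)] g[OF cc(2)] cc(3) by (simp add: dist_commute)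
      finally show "c = c'" using C cc by force
    qed
    moreover have "g ` C \<subseteq> K" using g by auto
    ultimately show "card C \<le> card K" using K(2) by (rule card_inj_on_le)
  qed
qed

lemma kiss_bounded:
  "\<exists>N::nat. \<forall>k. (\<exists>C::'a::euclidean_space set. finite C \<and> card C = k \<and>
      (\<forall>c\<in>C. cball c 1 \<inter> cball 0 1 \<noteq> {} \<and> ball c 1 \<inter> ball 0 1 = {}) \<and>
      (\<forall>c\<in>C. \<forall>c'\<in>C. c \<noteq> c' \<longrightarrow> ball c 1 \<inter> ball c' 1 = {})) \<longrightarrow> k \<le> N"
proof -
  obtain N where N: "\<forall>C::'a set. C \<subseteq> cball 0 2 \<and>
      (\<forall>c\<in>C. \<forall>c'\<in>C. c \<noteq> c' \<longrightarrow> 2 \<le> dist c c') \<longrightarrow> card C \<le> N"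
    using packing_bound by blast
  show ?thesis
  proof (intro exI allI impI)
    fix k
    assume "\<exists>C::'a set. finite C \<and> card C = k \<and>
      (\<forall>c\<in>C. cball c 1 \<inter> cball 0 1 \<noteq> {} \<and> ball c 1 \<inter> ball 0 1 = {}) \<and>
      (\<forall>c\<in>C. \<forall>c'\<in>C. c \<noteq> c' \<longrightarrow> ball c 1 \<inter> ball c' 1 = {})"
    then obtain C :: "'a set" where C: "card C = k"
      "\<forall>c\<in>C. cball c 1 \<inter> cball 0 1 \<noteq> {}"
      "\<forall>c\<in>C. \<forall>c'\<in>C. c \<noteq> c' \<longrightarrow> ball c 1 \<inter> ball c' 1 = {}" by blast
    have "C \<subseteq> cball 0 2"
    proof
      fix c assume "c \<in> C"
      then obtain z where "z \<in> cball c 1" "z \<in> cball 0 1" using C(2) by blast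
      then have "dist c z \<le> 1" "dist 0 z \<le> 1" by auto
      then have "dist 0 c \<le> 2" using dist_triangle[of 0 c z] by (simp add: dist_commute)
      then show "c \<in> cball 0 2" by simp
    qed
    moreover have "\<forall>c\<in>C. \<forall>c'\<in>C. c \<noteq> c' \<longrightarrow> 2 \<le> dist c c'"
    proof (intro ballI impI)
      fix c c' assume cc: "c \<in> C" "c' \<in> C" "c \<noteq> c'"
      show "2 \<le> dist c c'"
      proof (rule ccontr)
        assume "\<not> 2 \<le> dist c c'"
        define m where "m = midpoint c c'"
        have "dist c m < 1" "dist c' m < 1" using \<open>\<not> 2 \<le> dist c c'\<close>
          unfolding m_def by (simp_all add: dist_midpoint)
        then have "m \<in> ball c 1 \<inter> ball c' 1" by simp
        then show False using C(3) cc by blast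
      qed
    qed
    ultimately have "card C \<le> N" using N[rule_format, of C] by blast
    then show "k \<le> N" using C(1) by simp
  qed
qed

lemma kiss_le:
  fixes C :: "'a::euclidean_space set"
  assumes "finite C" "\<And>c. c \<in> C \<Longrightarrow> norm c = 2"
    "\<And>c c'. c \<in> C \<Longrightarrow> c' \<in> C \<Longrightarrow> c \<noteq> c' \<Longrightarrow> 2 \<le> dist c c'"
  shows "card C \<le> kissing_number TYPE('a)"
proof -
  obtain N where N: "\<forall>k. (\<exists>C::'a set. finite C \<and> card C = k \<and>
      (\<forall>c\<in>C. cball c 1 \<inter> cball 0 1 \<noteq> {} \<and> ball c 1 \<inter> ball 0 1 = {}) \<and>
      (\<forall>c\<in>C. \<forall>c'\<in>C. c \<noteq> c' \<longrightarrow> ball c 1 \<inter> ball c' 1 = {})) \<longrightarrow> k \<le> N"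
    using kiss_bounded by blast
  have P: "\<exists>C'::'a set. finite C' \<and> card C' = card C \<and>
      (\<forall>c\<in>C'. cball c 1 \<inter> cball 0 1 \<noteq> {} \<and> ball c 1 \<inter> ball 0 1 = {}) \<and>
      (\<forall>c\<in>C'. \<forall>c'\<in>C'. c \<noteq> c' \<longrightarrow> ball c 1 \<inter> ball c' 1 = {})"
  proof (intro exI conjI ballI impI)
    show "finite C" "card C = card C" by (simp_all add: assms)
  next
    fix c assume c: "c \<in> C"
    have h1: "norm ((1/2) *\<^sub>R c) = 1" using assms(2)[OF c] by simp
    have "c - (1/2) *\<^sub>R c = (1 - 1/2) *\<^sub>R c" by (simp only: scaleR_left_diff_distrib scaleR_one)
    then have h2: "norm (c - (1/2) *\<^sub>R c) = 1" using assms(2)[OF c] by simp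
    have "(1/2) *\<^sub>R c \<in> cball c 1 \<inter> cball 0 1"
      using h1 h2 by (simp add: dist_norm)
    then show "cball c 1 \<inter> cball 0 1 \<noteq> {}" by blast
    show "ball c 1 \<inter> ball 0 1 = {}"
    proof (rule ccontr)
      assume "ball c 1 \<inter> ball 0 1 \<noteq> {}"
      then obtain z where "dist c z < 1" "dist 0 z < 1" by auto
      then have "dist 0 c < 2" using dist_triangle[of 0 c z] by (simp add: dist_commute)
      then show False using assms(2)[OF c] by simp
    qed
  next
    fix c c' assume cc: "c \<in> C" "c' \<in> C" "c \<noteq> c'"
    show "ball c 1 \<inter> ball c' 1 = {}"
    proof (rule ccontr)
      assume "ball c 1 \<inter> ball c' 1 \<noteq> {}"
      then obtain z where "dist c z < 1" "dist c' z < 1" by auto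
      then have "dist c c' < 2" using dist_triangle[of c c' z] by (simp add: dist_commute)
      then show False using assms(3)[OF cc] by simp
    qed
  qed
  show ?thesis unfolding kissing_number_def
    apply (rule Greatest_le_nat)
     apply (rule P)
    apply (erule N[rule_format])
    done
qed

lemma kiss_ge2: "2 \<le> kissing_number TYPE('a::euclidean_space)"
proof -
  obtain e :: 'a where e: "e \<in> Basis" using nonempty_Basis by blast
  then have ne: "norm e = 1" by simp
  define C where "C = {2 *\<^sub>R e, - (2 *\<^sub>R e)}"
  have "2 *\<^sub>R e - - (2 *\<^sub>R e) = 4 *\<^sub>R e"
    by (simp add: scaleR_left_distrib[symmetric])
  then have h4: "norm (2 *\<^sub>R e - - (2 *\<^sub>R e)) = 4" using ne by simp
  then have h4': "norm (- (2 *\<^sub>R e) - 2 *\<^sub>R e) = 4" by (simp only: norm_minus_commute)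
  have "2 *\<^sub>R e \<noteq> - (2 *\<^sub>R e)"
  proof
    assume "2 *\<^sub>R e = - (2 *\<^sub>R e)"
    then have "norm (2 *\<^sub>R e - - (2 *\<^sub>R e)) = 0" by (simp only: diff_self norm_zero)
    then show False using h4 by simp
  qed
  then have "card C = 2" unfolding C_def by simp
  moreover have "card C \<le> kissing_number TYPE('a)"
  proof (rule kiss_le)
    show "finite C" unfolding C_def by simp
    show "norm c = 2" if "c \<in> C" for c using that ne unfolding C_def by auto
    show "2 \<le> dist c c'" if "c \<in> C" "c' \<in> C" "c \<noteq> c'" for c c'
      using that h4 h4' unfolding C_def dist_norm by auto
  qed
  ultimately show ?thesis by simp
qed



lemma powr_conv0:
  fixes x y t p :: real
  assumes "1 \<le> p" "0 \<le> x" "0 \<le> y" "0 \<le> t" "t \<le> 1"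
  shows "(t * x + (1 - t) * y) powr p \<le> t * x powr p + (1 - t) * y powr p"
proof -
  have sub: "(s * z) powr p \<le> s * z powr p" if "0 \<le> s" "s \<le> 1" "0 \<le> z" for s z :: real
  proof -
    have "s powr p \<le> s powr 1" using powr_mono'[of 1 p s] that assms(1) by simp
    then have "s powr p \<le> s" using that by simp
    then show ?thesis using that by (simp add: powr_mult mult_right_mono)
  qed
  show ?thesis
  proof (cases "x = 0")
    case True
    then show ?thesis using sub[of "1 - t" y] assms by simp
  next
    case xn: False
    show ?thesis
    proof (cases "y = 0")
      case True
      then show ?thesis using sub[of t x] assms by simp
    next
      case False
      then have "x \<in> {0<..}" "y \<in> {0<..}" using xn assms by auto
      from convex_onD[OF powr_convex[OF assms(1)], of "1 - t" x y, OF _ _ this(1) this(2)] assms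
      show ?thesis by (simp add: algebra_simps)
    qed
  qed
qed

definition pn :: "real \<Rightarrow> nat \<Rightarrow> (nat \<Rightarrow> real) \<Rightarrow> real" where
  "pn p n v = ((1 / real n) * (\<Sum>i<n. v i powr p)) powr (1 / p)"

lemma pn_nonneg: "0 \<le> pn p n v"
  unfolding pn_def by simp

lemma pn_mono:
  assumes "1 \<le> p" "\<And>i. i < n \<Longrightarrow> 0 \<le> v i" "\<And>i. i < n \<Longrightarrow> v i \<le> w i"
  shows "pn p n v \<le> pn p n w"
proof -
  have "(\<Sum>i<n. v i powr p) \<le> (\<Sum>i<n. w i powr p)"
    by (rule sum_mono) (use assms in \<open>auto intro: powr_mono2\<close>)
  then have "(1 / real n) * (\<Sum>i<n. v i powr p) \<le> (1 / real n) * (\<Sum>i<n. w i powr p)"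
    by (simp add: divide_right_mono)
  moreover have "0 \<le> (1 / real n) * (\<Sum>i<n. v i powr p)" by (simp add: sum_nonneg)
  ultimately show ?thesis unfolding pn_def
    using powr_mono2[of "1/p"] assms(1) by simp
qed

lemma pn_pow:
  assumes "1 \<le> p"
  shows "(pn p n v) powr p = (1 / real n) * (\<Sum>i<n. v i powr p)"
  unfolding pn_def using assms by (simp add: powr_powr sum_nonneg)

lemma pn_zero:
  assumes "1 \<le> p" "\<And>i. i < n \<Longrightarrow> 0 \<le> v i" "pn p n v = 0" "i < n"
  shows "v i = 0"
proof -
  have "(1 / real n) * (\<Sum>i<n. v i powr p) = 0" using pn_pow[OF assms(1), of n v] assms(3) assms(1)
    by simp
  then have "(\<Sum>i<n. v i powr p) = 0" using assms(4) by simp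
  then have "v i powr p = 0" using sum_nonneg_eq_0_iff[of "{..<n}" "\<lambda>i. v i powr p"] assms(4) by simp
  then show ?thesis by simp
qed

lemma minkowski:
  assumes p: "1 \<le> p" and n: "0 < n" and v: "\<And>i. i < n \<Longrightarrow> 0 \<le> v i" and w: "\<And>i. i < n \<Longrightarrow> 0 \<le> w i"
  shows "pn p n (\<lambda>i. v i + w i) \<le> pn p n v + pn p n w"
proof -
  define A where "A = pn p n v"
  define B where "B = pn p n w"
  show ?thesis
  proof (cases "A = 0")
    case True
    have "v i = 0" if "i < n" for i using pn_zero[of p n v i] p v that True A_def by simp
    then have "(\<Sum>i<n. (v i + w i) powr p) = (\<Sum>i<n. w i powr p)" by (intro sum.cong) simp_all
    then have "pn p n (\<lambda>i. v i + w i) = pn p n w" unfolding pn_def by simp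
    then show ?thesis using pn_nonneg[of p n v] by simp
  next
    case An: False
    show ?thesis
    proof (cases "B = 0")
      case True
      have "w i = 0" if "i < n" for i using pn_zero[of p n w i] p w that True B_def by simp
      then have "(\<Sum>i<n. (v i + w i) powr p) = (\<Sum>i<n. v i powr p)" by (intro sum.cong) simp_all
      then have "pn p n (\<lambda>i. v i + w i) = pn p n v" unfolding pn_def by simp
      then show ?thesis using pn_nonneg[of p n w] by simp
    next
      case False
      have A0: "A > 0" using An pn_nonneg[of p n v] A_def by simp
      have B0: "B > 0" using False pn_nonneg[of p n w] B_def by simp
      define t where "t = A / (A + B)"
      have t01: "0 \<le> t" "t \<le> 1" using A0 B0 by (auto simp: t_def)
      have key: "((v i + w i) / (A + B)) powr p \<le> t * (v i / A) powr p + (1 - t) * (w i / B) powr p"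
        if "i < n" for i
      proof -
        have t1: "1 - t = B / (A + B)" using A0 B0 by (simp add: t_def field_simps)
        have "t * (v i / A) + (1 - t) * (w i / B) = v i / (A + B) + w i / (A + B)"
          using A0 B0 unfolding t1 by (simp add: t_def)
        then have "(v i + w i) / (A + B) = t * (v i / A) + (1 - t) * (w i / B)"
          by (simp add: add_divide_distrib)
        then show ?thesis using powr_conv0[OF p, of "v i / A" "w i / B" t] v[OF that] w[OF that] A0 B0 t01
          by simp
      qed
      have Ap: "A powr p = (1 / real n) * (\<Sum>i<n. v i powr p)" using pn_pow[OF p] A_def by simp
      have Bp: "B powr p = (1 / real n) * (\<Sum>i<n. w i powr p)" using pn_pow[OF p] B_def by simp
      have "(1 / real n) * (\<Sum>i<n. ((v i + w i) / (A + B)) powr p)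
            \<le> (1 / real n) * (\<Sum>i<n. t * (v i / A) powr p + (1 - t) * (w i / B) powr p)"
        by (intro mult_left_mono sum_mono key) auto
      also have "\<dots> = (t / A powr p) * ((1 / real n) * (\<Sum>i<n. v i powr p))
                     + ((1 - t) / B powr p) * ((1 / real n) * (\<Sum>i<n. w i powr p))"
      proof -
        have "(\<Sum>i<n. t * (v i / A) powr p + (1 - t) * (w i / B) powr p)
            = (\<Sum>i<n. (t / A powr p) * v i powr p + ((1 - t) / B powr p) * w i powr p)"
          by (simp add: powr_divide)
        also have "\<dots> = (t / A powr p) * (\<Sum>i<n. v i powr p) + ((1 - t) / B powr p) * (\<Sum>i<n. w i powr p)"
          by (simp add: sum.distrib sum_distrib_left)
        finally have E: "(\<Sum>i<n. t * (v i / A) powr p + (1 - t) * (w i / B) powr p)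
           = (t / A powr p) * (\<Sum>i<n. v i powr p) + ((1 - t) / B powr p) * (\<Sum>i<n. w i powr p)" .
        show ?thesis unfolding E by (simp only: distrib_left mult.left_commute)
      qed
      also have "\<dots> = 1" unfolding Ap[symmetric] Bp[symmetric] using A0 B0 by simp
      finally have s1: "(1 / real n) * (\<Sum>i<n. ((v i + w i) / (A + B)) powr p) \<le> 1" .
      have "(1 / real n) * (\<Sum>i<n. ((v i + w i) / (A + B)) powr p)
            = ((1 / real n) * (\<Sum>i<n. (v i + w i) powr p)) / (A + B) powr p"
        by (simp add: powr_divide sum_divide_distrib mult.commute)
      then have s1': "((1 / real n) * (\<Sum>i<n. (v i + w i) powr p)) / (A + B) powr p \<le> 1"
        using s1 by simp
      have cpos: "(A + B) powr p > 0" using A0 B0 by simp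
      have s2: "(1 / real n) * (\<Sum>i<n. (v i + w i) powr p) \<le> (A + B) powr p"
        using s1' unfolding pos_divide_le_eq[OF cpos] by simp
      have "pn p n (\<lambda>i. v i + w i) \<le> ((A + B) powr p) powr (1 / p)"
        unfolding pn_def by (rule powr_mono2) (use s2 p in \<open>auto intro!: sum_nonneg divide_nonneg_nonneg\<close>)
      also have "\<dots> = A + B" using p A0 B0 by (simp add: powr_powr)
      finally show ?thesis unfolding A_def B_def .
    qed
  qed
qed

lemma pn_scale:
  assumes p: "1 \<le> p" and t: "0 \<le> t" and g: "\<And>i. i < n \<Longrightarrow> 0 \<le> g i"
    and le: "(\<Sum>i<n. g i powr p) \<le> t * (\<Sum>i<n. v i powr p)"
  shows "pn p n g \<le> t powr (1 / p) * pn p n v"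
proof -
  have "(1 / real n) * (\<Sum>i<n. g i powr p) \<le> t * ((1 / real n) * (\<Sum>i<n. v i powr p))"
    using le by (simp add: divide_right_mono)
  moreover have "0 \<le> (1 / real n) * (\<Sum>i<n. g i powr p)" by (simp add: sum_nonneg)
  ultimately have "pn p n g \<le> (t * ((1 / real n) * (\<Sum>i<n. v i powr p))) powr (1 / p)"
    unfolding pn_def using powr_mono2[of "1/p"] p by simp
  also have "\<dots> = t powr (1 / p) * pn p n v" unfolding pn_def
    by (simp only: powr_mult)
  finally show ?thesis .
qed



lemma d0_nonneg: "0 \<le> d0 x y" unfolding d0_def by simp
lemma d0_le1: "d0 x y \<le> 1" unfolding d0_def by simp
lemma d0_sym: "d0 x y = d0 y x" unfolding d0_def by (simp add: norm_minus_commute)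
lemma d0_self: "d0 x x = 0" unfolding d0_def by simp
lemma d0_eq0: "d0 x y = 0 \<longleftrightarrow> x = y" unfolding d0_def by (auto simp: min_def)
lemma d0_le_norm: "d0 x y \<le> norm (x - y)" unfolding d0_def by simp
lemma d0_lt1: "d0 x y < 1 \<Longrightarrow> d0 x y = norm (x - y)" unfolding d0_def by (auto simp: min_def split: if_splits)
lemma d0_tri: "d0 x z \<le> d0 x y + d0 y z"
proof -
  have "norm (x - z) \<le> norm (x - y) + norm (y - z)" using norm_triangle_ineq[of "x - y" "y - z"] by simp
  then show ?thesis unfolding d0_def
    by (auto simp: min_def intro: add_increasing add_increasing2)
qed

definition nnd :: "'a::real_normed_vector list \<Rightarrow> nat \<Rightarrow> real" where
  "nnd zs i = Min ((\<lambda>k. d0 (zs!i) (zs!k)) ` ({..<length zs} - {i}))"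

definition NB :: "'a::real_normed_vector list \<Rightarrow> nat \<Rightarrow> nat set" where
  "NB zs i = {k \<in> {..<length zs}. k \<noteq> i \<and> d0 (zs!i) (zs!k) = nnd zs i}"

lemma nnd_ne: "2 \<le> length zs \<Longrightarrow> i < length zs \<Longrightarrow> {..<length zs} - {i} \<noteq> {}"
proof -
  assume a: "2 \<le> length zs" "i < length zs"
  show ?thesis
  proof (cases "i = 0")
    case True then have "1 \<in> {..<length zs} - {i}" using a by auto
    then show ?thesis by blast
  next
    case False then have "0 \<in> {..<length zs} - {i}" using a by auto
    then show ?thesis by blast
  qed
qed

lemma nnd_le: "k < length zs \<Longrightarrow> k \<noteq> i \<Longrightarrow> nnd zs i \<le> d0 (zs!i) (zs!k)"
  unfolding nnd_def by (rule Min_le) auto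

lemma nnd_attained:
  assumes "2 \<le> length zs" "i < length zs"
  shows "\<exists>k. k < length zs \<and> k \<noteq> i \<and> d0 (zs!i) (zs!k) = nnd zs i"
proof -
  have "nnd zs i \<in> (\<lambda>k. d0 (zs!i) (zs!k)) ` ({..<length zs} - {i})"
    unfolding nnd_def by (rule Min_in) (use nnd_ne[OF assms] in auto)
  then show ?thesis by auto
qed

lemma NB_ne: "2 \<le> length zs \<Longrightarrow> i < length zs \<Longrightarrow> NB zs i \<noteq> {}"
  using nnd_attained unfolding NB_def by fastforce

lemma NB_fin: "finite (NB zs i)" unfolding NB_def by simp

lemma nnd_nonneg: "2 \<le> length zs \<Longrightarrow> i < length zs \<Longrightarrow> 0 \<le> nnd zs i"
  using nnd_attained d0_nonneg by metis

lemma nnd_le1: "2 \<le> length zs \<Longrightarrow> i < length zs \<Longrightarrow> nnd zs i \<le> 1"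
  using nnd_attained d0_le1 by metis



lemma E_card:
  fixes ys :: "'a::euclidean_space list"
  assumes n2: "2 \<le> length ys" and k: "k < length ys"
  shows "card {i\<in>{..<length ys}. nnd ys i < 1 \<and> k \<in> NB ys i \<and> ys!i \<noteq> ys!k}
           \<le> kissing_number TYPE('a)"
proof -
  define E where "E = {i\<in>{..<length ys}. nnd ys i < 1 \<and> k \<in> NB ys i \<and> ys!i \<noteq> ys!k}"
  define c where "c i = 2 *\<^sub>R ((ys!i - ys!k) /\<^sub>R norm (ys!i - ys!k))" for i
  have r: "nnd ys i = norm (ys!i - ys!k)" if "i \<in> E" for i
  proof -
    have "d0 (ys!i) (ys!k) = nnd ys i" "nnd ys i < 1" using that unfolding E_def NB_def by auto
    then show ?thesis using d0_lt1[of "ys!i" "ys!k"] by simp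
  qed
  have Ei: "i < length ys" "i \<noteq> k" "ys!i \<noteq> ys!k" if "i \<in> E" for i
    using that unfolding E_def NB_def by auto
  have sep: "2 \<le> dist (c i) (c i')" if "i \<in> E" "i' \<in> E" "i \<noteq> i'" for i i'
  proof -
    have "norm (ys!i - ys!k) \<le> norm ((ys!i - ys!k) - (ys!i' - ys!k))"
    proof -
      have "nnd ys i \<le> d0 (ys!i) (ys!i')" by (rule nnd_le) (use Ei that in auto)
      then show ?thesis using r[OF that(1)] d0_le_norm[of "ys!i" "ys!i'"] by simp
    qed
    moreover have "norm (ys!i' - ys!k) \<le> norm ((ys!i - ys!k) - (ys!i' - ys!k))"
    proof -
      have "nnd ys i' \<le> d0 (ys!i') (ys!i)" by (rule nnd_le) (use Ei that in auto)
      then show ?thesis using r[OF that(2)] d0_le_norm[of "ys!i'" "ys!i"]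
        by (simp add: norm_minus_commute)
    qed
    ultimately have "1 \<le> norm ((ys!i - ys!k) /\<^sub>R norm (ys!i - ys!k) - (ys!i' - ys!k) /\<^sub>R norm (ys!i' - ys!k))"
      using Ei that by (intro unit_sep) auto
    moreover have "dist (c i) (c i') = 2 * norm ((ys!i - ys!k) /\<^sub>R norm (ys!i - ys!k) - (ys!i' - ys!k) /\<^sub>R norm (ys!i' - ys!k))"
    proof -
      have "c i - c i' = 2 *\<^sub>R ((ys!i - ys!k) /\<^sub>R norm (ys!i - ys!k) - (ys!i' - ys!k) /\<^sub>R norm (ys!i' - ys!k))"
        unfolding c_def by (rule scaleR_diff_right[symmetric])
      then show ?thesis unfolding dist_norm by (simp only: norm_scaleR)
    qed
    ultimately show ?thesis by simp
  qed
  have inj: "inj_on c E"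
  proof (rule inj_onI)
    fix i i' assume "i \<in> E" "i' \<in> E" "c i = c i'"
    then show "i = i'" using sep[of i i'] by (cases "i = i'") auto
  qed
  have "card (c ` E) \<le> kissing_number TYPE('a)"
  proof (rule kiss_le)
    show "finite (c ` E)" unfolding E_def by simp
    show "norm x = 2" if "x \<in> c ` E" for x
      using that Ei unfolding c_def by auto
    show "2 \<le> dist x x'" if "x \<in> c ` E" "x' \<in> c ` E" "x \<noteq> x'" for x x'
      using that sep by auto
  qed
  then show ?thesis using card_image[OF inj] unfolding E_def by simp
qed

lemma weight_bound:
  fixes ys :: "'a::euclidean_space list"
  assumes n2: "2 \<le> length ys" and k: "k < length ys"
  shows "(\<Sum>i\<in>{i\<in>{..<length ys}. nnd ys i < 1 \<and> k \<in> NB ys i}. 1 / real (card (NB ys i)))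
           \<le> real (kissing_number TYPE('a))"
proof -
  define n where "n = length ys"
  define P where "P = {i\<in>{..<n}. nnd ys i < 1 \<and> k \<in> NB ys i}"
  define S where "S = {j\<in>{..<n}. ys!j = ys!k}"
  define s where "s = card S"
  define \<tau> where "\<tau> = real (kissing_number TYPE('a))"
  have \<tau>2: "2 \<le> \<tau>" unfolding \<tau>_def using kiss_ge2[where 'a='a] by simp
  have finS: "finite S" unfolding S_def by simp
  have kS: "k \<in> S" unfolding S_def n_def using k by simp
  have "card S > 0" using finS kS by (auto simp: card_gt_0_iff)
  then have s1: "1 \<le> s" unfolding s_def by simp
  have finP: "finite P" unfolding P_def by simp
  have split: "(\<Sum>i\<in>P. 1 / real (card (NB ys i)))
      = (\<Sum>i\<in>P \<inter> S. 1 / real (card (NB ys i))) + (\<Sum>i\<in>P - S. 1 / real (card (NB ys i)))"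
    by (rule sum.Int_Diff[OF finP])
  have NBD: "NB ys i = S - {i}" if "i \<in> P \<inter> S" for i
  proof -
    have i: "i < n" "ys!i = ys!k" "k \<in> NB ys i" using that unfolding P_def S_def by auto
    then have "nnd ys i = d0 (ys!i) (ys!k)" unfolding NB_def by simp
    then have nz: "nnd ys i = 0" using i(2) d0_self by simp
    show ?thesis unfolding NB_def S_def n_def[symmetric] nz d0_eq0 using i(2) by auto
  qed
  have D1: "(\<Sum>i\<in>P \<inter> S. 1 / real (card (NB ys i))) \<le> (if P \<inter> S = {} then 0 else 1)"
  proof (cases "P \<inter> S = {}")
    case True then show ?thesis by simp
  next
    case False
    have sub: "P \<inter> S \<subseteq> S - {k}" unfolding P_def NB_def by auto
    have "card (P \<inter> S) \<le> card (S - {k})" using finS sub by (intro card_mono) auto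
    then have cPS: "card (P \<inter> S) \<le> s - 1" unfolding s_def using card_Diff_singleton[OF kS] by simp
    have "(\<Sum>i\<in>P \<inter> S. 1 / real (card (NB ys i))) = (\<Sum>i\<in>P \<inter> S. 1 / real (s - 1))"
    proof (rule sum.cong)
      fix i assume "i \<in> P \<inter> S"
      then show "1 / real (card (NB ys i)) = 1 / real (s - 1)"
        using NBD[of i] finS unfolding s_def by (simp add: card_Diff_singleton)
    qed simp
    also have "\<dots> = real (card (P \<inter> S)) / real (s - 1)" by simp
    also have "\<dots> \<le> 1"
    proof -
      have "0 < card (P \<inter> S)" using False finP by (simp add: card_gt_0_iff)
      then have "0 < s - 1" using cPS by simp
      then show ?thesis using cPS by simp
    qed
    finally show ?thesis using False by simp
  qed
  have D2: "(\<Sum>i\<in>P - S. 1 / real (card (NB ys i))) \<le> \<tau> / s"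
  proof -
    have "(\<Sum>i\<in>P - S. 1 / real (card (NB ys i))) \<le> real (card (P - S)) * (1 / s)"
    proof (rule sum_bounded_above)
      fix i assume i: "i \<in> P - S"
      have "S \<subseteq> NB ys i"
      proof
        fix j assume j: "j \<in> S"
        have "ys!i \<noteq> ys!k" "i < n" "k \<in> NB ys i" using i unfolding S_def P_def by auto
        then show "j \<in> NB ys i" using j unfolding NB_def S_def n_def by auto
      qed
      then have "s \<le> card (NB ys i)" unfolding s_def by (rule card_mono[OF NB_fin])
      then show "1 / real (card (NB ys i)) \<le> 1 / real s" using s1
        by (intro divide_left_mono) auto
    qed
    moreover have "card (P - S) \<le> kissing_number TYPE('a)"
    proof -
      have "P - S = {i\<in>{..<length ys}. nnd ys i < 1 \<and> k \<in> NB ys i \<and> ys!i \<noteq> ys!k}"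
        unfolding P_def S_def n_def by auto
      then show ?thesis using E_card[OF n2 k] by simp
    qed
    moreover have "real (card (P - S)) * (1 / s) \<le> \<tau> * (1 / s)"
      using calculation(2) unfolding \<tau>_def by (intro mult_right_mono) auto
    ultimately show ?thesis by simp
  qed
  have tot: "(\<Sum>i\<in>P. 1 / real (card (NB ys i))) \<le> (if P \<inter> S = {} then 0 else 1) + \<tau> / s"
    using split D1 D2 by linarith
  have "(\<Sum>i\<in>P. 1 / real (card (NB ys i))) \<le> \<tau>"
  proof (cases "P \<inter> S = {}")
    case True
    have "\<tau> / s \<le> \<tau>" using s1 \<tau>2 by (simp add: divide_le_eq)
    moreover have "(if P \<inter> S = {} then 0 else 1) = (0::real)" using True by simp
    ultimately show ?thesis using tot by linarith
  next
    case False
    then obtain i where "i \<in> P \<inter> S" by blast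
    then have "i \<noteq> k" "i \<in> S" unfolding P_def NB_def by auto
    then have "{i, k} \<subseteq> S" using kS by auto
    then have "card {i, k} \<le> s" unfolding s_def using finS by (intro card_mono) auto
    then have "2 \<le> s" using \<open>i \<noteq> k\<close> by simp
    then have "\<tau> / s \<le> \<tau> / 2" using \<tau>2 by (intro divide_left_mono) auto
    moreover have "(if P \<inter> S = {} then 0 else 1) = (1::real)" using False by simp
    ultimately show ?thesis using tot \<tau>2 by linarith
  qed
  then show ?thesis unfolding P_def n_def \<tau>_def .
qed



lemma g_sum_bound:
  fixes ys :: "'a::euclidean_space list" and \<delta> :: "nat \<Rightarrow> real"
  assumes p: "1 \<le> p" and n2: "2 \<le> length ys" and \<delta>: "\<And>i. 0 \<le> \<delta> i"
  shows "(\<Sum>i<length ys. (if nnd ys i < 1 then Min (\<delta> ` NB ys i) else 0) powr p)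
          \<le> real (kissing_number TYPE('a)) * (\<Sum>k<length ys. \<delta> k powr p)"
proof -
  define n where "n = length ys"
  define \<tau> where "\<tau> = real (kissing_number TYPE('a))"
  define h where "h i = (\<Sum>k\<in>NB ys i. \<delta> k powr p / real (card (NB ys i)))" for i
  have step1: "(if nnd ys i < 1 then Min (\<delta> ` NB ys i) else 0) powr p \<le> (if nnd ys i < 1 then h i else 0)"
    if i: "i < n" for i
  proof (cases "nnd ys i < 1")
    case True
    have ne: "NB ys i \<noteq> {}" using NB_ne[OF n2] i unfolding n_def by simp
    have "real (card (NB ys i)) * (Min (\<delta> ` NB ys i) powr p) \<le> (\<Sum>k\<in>NB ys i. \<delta> k powr p)"
    proof (rule sum_bounded_below)
      fix k assume k: "k \<in> NB ys i"
      have "Min (\<delta> ` NB ys i) \<le> \<delta> k" using k NB_fin by (intro Min_le) auto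
      moreover have "0 \<le> Min (\<delta> ` NB ys i)" using ne NB_fin \<delta> by (subst Min_ge_iff) auto
      ultimately show "Min (\<delta> ` NB ys i) powr p \<le> \<delta> k powr p" using p by (intro powr_mono2) auto
    qed
    moreover have "0 < real (card (NB ys i))" using ne NB_fin by (simp add: card_gt_0_iff)
    ultimately have "Min (\<delta> ` NB ys i) powr p \<le> (\<Sum>k\<in>NB ys i. \<delta> k powr p) / real (card (NB ys i))"
      by (simp add: le_divide_eq mult.commute)
    then show ?thesis using True unfolding h_def by (simp add: sum_divide_distrib)
  next
    case False
    then show ?thesis by simp
  qed
  have "(\<Sum>i<n. (if nnd ys i < 1 then Min (\<delta> ` NB ys i) else 0) powr p)
        \<le> (\<Sum>i<n. (if nnd ys i < 1 then h i else 0))"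
    by (rule sum_mono) (use step1 in auto)
  also have "\<dots> = (\<Sum>i\<in>{i\<in>{..<n}. nnd ys i < 1}. h i)"
    by (rule sum.inter_filter[symmetric]) simp
  also have "\<dots> = (\<Sum>i\<in>{i\<in>{..<n}. nnd ys i < 1}. \<Sum>k\<in>{k\<in>{..<n}. k \<noteq> i \<and> d0 (ys!i) (ys!k) = nnd ys i}.
                    \<delta> k powr p / real (card (NB ys i)))"
    unfolding h_def NB_def n_def by simp
  also have "\<dots> = (\<Sum>k<n. \<Sum>i\<in>{i\<in>{i\<in>{..<n}. nnd ys i < 1}. k \<noteq> i \<and> d0 (ys!i) (ys!k) = nnd ys i}.
                    \<delta> k powr p / real (card (NB ys i)))"
    by (rule sum.swap_restrict) auto
  also have "\<dots> = (\<Sum>k<n. \<delta> k powr p * (\<Sum>i\<in>{i\<in>{..<length ys}. nnd ys i < 1 \<and> k \<in> NB ys i}.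
                    1 / real (card (NB ys i))))"
  proof (rule sum.cong)
    fix k assume k: "k \<in> {..<n}"
    have "{i\<in>{i\<in>{..<n}. nnd ys i < 1}. k \<noteq> i \<and> d0 (ys!i) (ys!k) = nnd ys i}
         = {i\<in>{..<length ys}. nnd ys i < 1 \<and> k \<in> NB ys i}"
      using k unfolding NB_def n_def by auto
    then show "(\<Sum>i\<in>{i\<in>{i\<in>{..<n}. nnd ys i < 1}. k \<noteq> i \<and> d0 (ys!i) (ys!k) = nnd ys i}.
                    \<delta> k powr p / real (card (NB ys i)))
        = \<delta> k powr p * (\<Sum>i\<in>{i\<in>{..<length ys}. nnd ys i < 1 \<and> k \<in> NB ys i}.
                    1 / real (card (NB ys i)))"
      by (simp add: sum_distrib_left)
  qed simp
  also have "\<dots> \<le> (\<Sum>k<n. \<delta> k powr p * \<tau>)"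
  proof (rule sum_mono)
    fix k assume k: "k \<in> {..<n}"
    show "\<delta> k powr p * (\<Sum>i\<in>{i\<in>{..<length ys}. nnd ys i < 1 \<and> k \<in> NB ys i}.
                    1 / real (card (NB ys i))) \<le> \<delta> k powr p * \<tau>"
      using weight_bound[OF n2, of k] k unfolding \<tau>_def n_def by (intro mult_left_mono) auto
  qed
  also have "\<dots> = \<tau> * (\<Sum>k<n. \<delta> k powr p)" by (simp add: sum_distrib_left mult.commute)
  finally show ?thesis unfolding n_def \<tau>_def .
qed



lemma list_main:
  fixes xs ys :: "'a::euclidean_space list"
  assumes p: "1 \<le> p" and len: "length xs = length ys" and n2: "2 \<le> length ys"
  shows "pn p (length ys) (nnd xs) \<le> pn p (length ys) (nnd ys)
           + (1 + real (kissing_number TYPE('a)) powr (1 / p)) * pn p (length ys) (\<lambda>i. d0 (xs!i) (ys!i))"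
proof -
  define n where "n = length ys"
  define \<tau> where "\<tau> = real (kissing_number TYPE('a))"
  define \<delta> where "\<delta> i = d0 (xs!i) (ys!i)" for i
  define g where "g i = (if nnd ys i < 1 then Min (\<delta> ` NB ys i) else 0)" for i
  have \<delta>0: "0 \<le> \<delta> i" for i unfolding \<delta>_def by (rule d0_nonneg)
  have g0: "0 \<le> g i" if "i < n" for i
  proof (cases "nnd ys i < 1")
    case True
    have ne: "NB ys i \<noteq> {}" using NB_ne[OF n2] that unfolding n_def by simp
    have "0 \<le> Min (\<delta> ` NB ys i)" using ne NB_fin \<delta>0 by (subst Min_ge_iff) auto
    then show ?thesis using True unfolding g_def by simp
  qed (simp add: g_def)
  have n2x: "2 \<le> length xs" using len n2 by simp
  have pw: "nnd xs i \<le> (nnd ys i + \<delta> i) + g i" if i: "i < n" for i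
  proof (cases "nnd ys i < 1")
    case True
    have ne: "NB ys i \<noteq> {}" using NB_ne[OF n2] i unfolding n_def by simp
    have "Min (\<delta> ` NB ys i) \<in> \<delta> ` NB ys i" using ne NB_fin by (intro Min_in) auto
    then obtain k where k: "k \<in> NB ys i" "\<delta> k = g i" using True unfolding g_def by auto
    then have kk: "k < n" "k \<noteq> i" "d0 (ys!i) (ys!k) = nnd ys i" unfolding NB_def n_def by auto
    have "nnd xs i \<le> d0 (xs!i) (xs!k)" by (rule nnd_le) (use kk len in \<open>auto simp: n_def\<close>)
    also have "\<dots> \<le> d0 (xs!i) (ys!i) + d0 (ys!i) (xs!k)" by (rule d0_tri)
    also have "\<dots> \<le> d0 (xs!i) (ys!i) + (d0 (ys!i) (ys!k) + d0 (ys!k) (xs!k))"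
      using d0_tri[of "ys!i" "xs!k" "ys!k"] by simp
    also have "\<dots> = (nnd ys i + \<delta> i) + g i" using kk k unfolding \<delta>_def by (simp add: d0_sym)
    finally show ?thesis .
  next
    case False
    have "nnd xs i \<le> 1" using nnd_le1[OF n2x] i len unfolding n_def by simp
    also have "\<dots> \<le> nnd ys i" using False by simp
    finally show ?thesis using \<delta>0[of i] g0[OF i] by simp
  qed
  have nn0: "0 \<le> nnd zs i" if "2 \<le> length zs" "i < length zs" for zs :: "'a list" and i
    using nnd_nonneg that by blast
  have "pn p n (nnd xs) \<le> pn p n (\<lambda>i. (nnd ys i + \<delta> i) + g i)"
    by (rule pn_mono[OF p]) (use pw nn0 n2x len in \<open>auto simp: n_def\<close>)
  also have "\<dots> \<le> pn p n (\<lambda>i. nnd ys i + \<delta> i) + pn p n g"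
    by (rule minkowski[OF p]) (use n2 nn0 n2 \<delta>0 g0 in \<open>auto simp: n_def\<close>)
  also have "\<dots> \<le> (pn p n (nnd ys) + pn p n \<delta>) + pn p n g"
  proof -
    have "ys \<noteq> []" using n2 by auto
    then show ?thesis
      using minkowski[OF p, of n "nnd ys" \<delta>] n2 nn0[OF n2] \<delta>0 unfolding n_def by simp
  qed
  also have "pn p n g \<le> \<tau> powr (1 / p) * pn p n \<delta>"
  proof (rule pn_scale[OF p])
    show "0 \<le> \<tau>" unfolding \<tau>_def by simp
    show "0 \<le> g i" if "i < n" for i using g0 that .
    show "(\<Sum>i<n. g i powr p) \<le> \<tau> * (\<Sum>i<n. \<delta> i powr p)"
      unfolding g_def n_def \<tau>_def by (rule g_sum_bound[OF p n2 \<delta>0])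
  qed
  finally have "pn p n (nnd xs) \<le> pn p n (nnd ys) + pn p n \<delta> + \<tau> powr (1 / p) * pn p n \<delta>" by simp
  then show ?thesis unfolding n_def \<tau>_def \<delta>_def by (simp add: algebra_simps)
qed



lemma set_mset_remove_nth:
  assumes "i < length xs"
  shows "set_mset (mset xs - {#xs!i#}) = (\<lambda>k. xs!k) ` ({..<length xs} - {i})"
proof -
  have e: "xs = take i xs @ xs!i # drop (Suc i) xs" by (rule id_take_nth_drop[OF assms])
  have "mset xs - {#xs!i#} = mset (take i xs @ drop (Suc i) xs)"
    by (subst e) simp
  then have "set_mset (mset xs - {#xs!i#}) = set (take i xs) \<union> set (drop (Suc i) xs)" by simp
  also have "\<dots> = (\<lambda>k. xs!k) ` ({..<length xs} - {i})"
  proof (intro equalityI subsetI)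
    fix x assume "x \<in> set (take i xs) \<union> set (drop (Suc i) xs)"
    then show "x \<in> (\<lambda>k. xs!k) ` ({..<length xs} - {i})"
    proof
      assume "x \<in> set (take i xs)"
      then obtain j where "j < length (take i xs)" "take i xs ! j = x" by (auto simp: in_set_conv_nth)
      then show ?thesis using assms by (intro image_eqI[of _ _ j]) auto
    next
      assume "x \<in> set (drop (Suc i) xs)"
      then obtain j where "j < length (drop (Suc i) xs)" "drop (Suc i) xs ! j = x" by (auto simp: in_set_conv_nth)
      then show ?thesis using assms by (intro image_eqI[of _ _ "Suc i + j"]) auto
    qed
  next
    fix x assume "x \<in> (\<lambda>k. xs!k) ` ({..<length xs} - {i})"
    then obtain k where k: "k < length xs" "k \<noteq> i" "x = xs!k" by auto
    show "x \<in> set (take i xs) \<union> set (drop (Suc i) xs)"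
    proof (cases "k < i")
      case True
      then have "take i xs ! k = x" using k by simp
      then show ?thesis using True k by (metis UnI1 length_take min_less_iff_conj nth_mem)
    next
      case False
      then have "drop (Suc i) xs ! (k - Suc i) = x" using k by simp
      moreover have "k - Suc i < length (drop (Suc i) xs)" using k False by simp
      ultimately show ?thesis by (metis UnI2 nth_mem)
    qed
  qed
  finally show ?thesis .
qed

lemma nn_stat_list:
  fixes xs :: "'a::real_normed_vector list"
  assumes p: "1 \<le> p" and n2: "2 \<le> length xs"
  shows "nn_stat p (mset xs) = pn p (length xs) (nnd xs)"
proof -
  define F where "F x = Min ((\<lambda>y. d0 x y powr p) ` set_mset (mset xs - {#x#}))" for x
  have Fi: "F (xs!i) = nnd xs i powr p" if i: "i < length xs" for i
  proof -
    have "F (xs!i) = Min ((\<lambda>k. d0 (xs!i) (xs!k) powr p) ` ({..<length xs} - {i}))"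
      unfolding F_def set_mset_remove_nth[OF i] image_image ..
    also have "\<dots> = nnd xs i powr p"
    proof (rule Min_eqI)
      show "finite ((\<lambda>k. d0 (xs!i) (xs!k) powr p) ` ({..<length xs} - {i}))" by simp
      show "nnd xs i powr p \<le> y" if y: "y \<in> (\<lambda>k. d0 (xs!i) (xs!k) powr p) ` ({..<length xs} - {i})" for y
      proof -
        obtain k where k: "k < length xs" "k \<noteq> i" "y = d0 (xs!i) (xs!k) powr p" using y by auto
        have "nnd xs i \<le> d0 (xs!i) (xs!k)" using k by (intro nnd_le) auto
        then show ?thesis using k nnd_nonneg[OF n2 i] p by (simp add: powr_mono2)
      qed
      show "nnd xs i powr p \<in> (\<lambda>k. d0 (xs!i) (xs!k) powr p) ` ({..<length xs} - {i})"
        using nnd_attained[OF n2 i] by force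
    qed
    finally show ?thesis .
  qed
  have "(\<Sum>x\<in>#mset xs. F x) = sum_list (map F xs)"
    by (simp add: sum_mset_sum_list[symmetric])
  also have "\<dots> = (\<Sum>i<length xs. F (xs!i))"
    by (simp add: sum_list_sum_nth atLeast0LessThan)
  also have "\<dots> = (\<Sum>i<length xs. nnd xs i powr p)"
    by (rule sum.cong) (simp_all add: Fi)
  finally have S: "(\<Sum>x\<in>#mset xs. F x) = (\<Sum>i<length xs. nnd xs i powr p)" .
  show ?thesis unfolding nn_stat_def pn_def using n2 S unfolding F_def by simp
qed



lemma finite_mset_pre: "finite {xs. mset xs = A}"
proof (rule finite_subset)
  show "{xs. mset xs = A} \<subseteq> {xs. set xs \<subseteq> set_mset A \<and> length xs = size A}" by auto
  show "finite {xs. set xs \<subseteq> set_mset A \<and> length xs = size A}"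
    by (rule finite_lists_length_eq) simp
qed

lemma d1_attained:
  fixes \<xi> \<eta> :: "'a::real_normed_vector multiset"
  assumes "size \<xi> = size \<eta>" "size \<xi> \<noteq> 0"
  shows "\<exists>xs ys. mset xs = \<xi> \<and> mset ys = \<eta> \<and>
           d1 p \<xi> \<eta> = pn p (size \<xi>) (\<lambda>i. d0 (xs!i) (ys!i))"
proof -
  define f where "f xs ys = ((1 / real (size \<xi>)) * (\<Sum>i<size \<xi>. d0 (xs ! i) (ys ! i) powr p)) powr (1 / p)"
    for xs ys :: "'a list"
  define M where "M = {f xs ys | xs ys. mset xs = \<xi> \<and> mset ys = \<eta>}"
  have M: "M = (\<lambda>(xs, ys). f xs ys) ` ({xs. mset xs = \<xi>} \<times> {ys. mset ys = \<eta>})"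
    unfolding M_def by auto
  have "finite M" unfolding M by (intro finite_imageI finite_cartesian_product finite_mset_pre)
  moreover have "M \<noteq> {}" unfolding M using ex_mset[of \<xi>] ex_mset[of \<eta>] by auto
  ultimately have "Min M \<in> M" by (rule Min_in)
  moreover have "d1 p \<xi> \<eta> = Min M" unfolding d1_def M_def f_def using assms by simp
  ultimately show ?thesis unfolding M_def f_def pn_def by auto
qed

lemma nn_stat_bounds:
  fixes \<xi> :: "'a::real_normed_vector multiset"
  assumes p: "1 \<le> p"
  shows "0 \<le> nn_stat p \<xi> \<and> nn_stat p \<xi> \<le> 1"
proof (cases "size \<xi> < 2")
  case True then show ?thesis unfolding nn_stat_def by simp
next
  case False
  obtain xs where xs: "mset xs = \<xi>" using ex_mset by blast
  have n2: "2 \<le> length xs" using False xs by auto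
  have e: "nn_stat p \<xi> = pn p (length xs) (nnd xs)" using nn_stat_list[OF p n2] xs by simp
  have "(\<Sum>i<length xs. nnd xs i powr p) \<le> (\<Sum>i<length xs. 1)"
  proof (rule sum_mono)
    fix i assume "i \<in> {..<length xs}"
    then have "0 \<le> nnd xs i" "nnd xs i \<le> 1" using nnd_nonneg[OF n2] nnd_le1[OF n2] by auto
    then show "nnd xs i powr p \<le> 1" using p by (intro powr_le1) auto
  qed
  then have "(1 / real (length xs)) * (\<Sum>i<length xs. nnd xs i powr p) \<le> 1"
    using n2 by (simp add: divide_le_eq)
  then have "pn p (length xs) (nnd xs) \<le> 1" unfolding pn_def using p
    by (intro powr_le1) (auto simp: sum_nonneg)
  then show ?thesis using e pn_nonneg by simp
qed

lemma d1_nonneg: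
  fixes \<xi> \<eta> :: "'a::real_normed_vector multiset"
  shows "0 \<le> d1 p \<xi> \<eta>"
proof (cases "size \<xi> = size \<eta> \<and> size \<xi> \<noteq> 0")
  case True
  then have "\<exists>xs ys. mset xs = \<xi> \<and> mset ys = \<eta> \<and> d1 p \<xi> \<eta> = pn p (size \<xi>) (\<lambda>i. d0 (xs!i) (ys!i))"
    using True by (intro d1_attained) auto
  then obtain xs ys :: "'a list" where "d1 p \<xi> \<eta> = pn p (size \<xi>) (\<lambda>i. d0 (xs!i) (ys!i))"
    by blast
  then show ?thesis using pn_nonneg by simp
next
  case False then show ?thesis unfolding d1_def by auto
qed

lemma lip_main:
  fixes \<xi> \<eta> :: "'a::euclidean_space multiset"
  assumes p: "1 \<le> p"
  shows "\<bar>nn_stat p \<xi> - nn_stat p \<eta>\<bar>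
           \<le> (1 + real (kissing_number TYPE('a)) powr (1 / p)) * d1 p \<xi> \<eta>"
proof -
  define K where "K = 1 + real (kissing_number TYPE('a)) powr (1 / p)"
  have K1: "1 \<le> K" unfolding K_def by simp
  have b1: "0 \<le> nn_stat p \<xi>" "nn_stat p \<xi> \<le> 1" using nn_stat_bounds[OF p] by auto
  have b2: "0 \<le> nn_stat p \<eta>" "nn_stat p \<eta> \<le> 1" using nn_stat_bounds[OF p] by auto
  have "\<bar>nn_stat p \<xi> - nn_stat p \<eta>\<bar> \<le> K * d1 p \<xi> \<eta>"
  proof (cases "size \<xi> = size \<eta>")
    case False
    then have "d1 p \<xi> \<eta> = 1" unfolding d1_def by simp
    then show ?thesis using b1 b2 K1 by simp
  next
    case eq: True
    show ?thesis
    proof (cases "size \<xi> < 2")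
      case True
      then have "nn_stat p \<xi> = 0" "nn_stat p \<eta> = 0" unfolding nn_stat_def using eq by auto
      then show ?thesis using d1_nonneg[of p \<xi> \<eta>] K1 by simp
    next
      case False
      then obtain xs ys where xy: "mset xs = \<xi>" "mset ys = \<eta>"
        "d1 p \<xi> \<eta> = pn p (size \<xi>) (\<lambda>i. d0 (xs!i) (ys!i))"
        using d1_attained[OF eq] by fastforce
      have len: "length xs = length ys" using xy eq by auto
      have n2: "2 \<le> length ys" using False xy eq by auto
      have n2x: "2 \<le> length xs" using len n2 by simp
      have sx: "size \<xi> = length ys" using xy len by auto
      have e1: "nn_stat p \<xi> = pn p (length ys) (nnd xs)" using nn_stat_list[OF p n2x] xy len by simp
      have e2: "nn_stat p \<eta> = pn p (length ys) (nnd ys)" using nn_stat_list[OF p n2] xy by simp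
      have sym: "(\<lambda>i. d0 (ys!i) (xs!i)) = (\<lambda>i. d0 (xs!i) (ys!i))" by (simp add: d0_sym)
      have i1: "nn_stat p \<xi> \<le> nn_stat p \<eta> + K * d1 p \<xi> \<eta>"
        using list_main[OF p len n2] e1 e2 xy(3) sx unfolding K_def by simp
      have i2: "nn_stat p \<eta> \<le> nn_stat p \<xi> + K * d1 p \<xi> \<eta>"
        using list_main[OF p len[symmetric] n2x] e1 e2 xy(3) sx len unfolding K_def sym by simp
      show ?thesis using i1 i2 by linarith
    qed
  qed
  then show ?thesis unfolding K_def .
qed


theorem proposition2:
  fixes X :: "(real ^ 'n) set" and p :: real
  assumes "compact X" and "1 \<le> p"
  shows "(\<forall>\<xi> \<eta>. set_mset \<xi> \<subseteq> X \<longrightarrow> set_mset \<eta> \<subseteq> X \<longrightarrow>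
            \<bar>nn_stat p \<xi> - nn_stat p \<eta>\<bar>
              \<le> 2 * (2 * real (kissing_number TYPE(real ^ 'n)) + 1) powr (1 / p) * d1 p \<xi> \<eta>)
       \<and> (p = 1 \<longrightarrow> (\<forall>\<xi> \<eta>. set_mset \<xi> \<subseteq> X \<longrightarrow> set_mset \<eta> \<subseteq> X \<longrightarrow>
            \<bar>nn_stat p \<xi> - nn_stat p \<eta>\<bar>
              \<le> (real (kissing_number TYPE(real ^ 'n)) + 1) * d1 p \<xi> \<eta>))"
proof -
  define \<tau> where "\<tau> = real (kissing_number TYPE(real ^ 'n))"
  have \<tau>0: "0 \<le> \<tau>" unfolding \<tau>_def by simp
  have main: "\<bar>nn_stat p \<xi> - nn_stat p \<eta>\<bar> \<le> (1 + \<tau> powr (1 / p)) * d1 p \<xi> \<eta>"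
    for \<xi> \<eta> :: "(real ^ 'n) multiset"
    unfolding \<tau>_def by (rule lip_main[OF assms(2)])
  have k1: "1 \<le> (2 * \<tau> + 1) powr (1 / p)" using \<tau>0 assms(2) by (intro ge_one_powr_ge_zero) auto
  have k2: "\<tau> powr (1 / p) \<le> (2 * \<tau> + 1) powr (1 / p)" using \<tau>0 assms(2) by (intro powr_mono2) auto
  have K: "1 + \<tau> powr (1 / p) \<le> 2 * (2 * \<tau> + 1) powr (1 / p)" using k1 k2 by linarith
  show ?thesis
  proof (intro conjI allI impI)
    fix \<xi> \<eta> :: "(real ^ 'n) multiset"
    have "(1 + \<tau> powr (1 / p)) * d1 p \<xi> \<eta> \<le> 2 * (2 * \<tau> + 1) powr (1 / p) * d1 p \<xi> \<eta>"
      using K d1_nonneg[of p \<xi> \<eta>] by (rule mult_right_mono)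
    then show "\<bar>nn_stat p \<xi> - nn_stat p \<eta>\<bar>
              \<le> 2 * (2 * real (kissing_number TYPE(real ^ 'n)) + 1) powr (1 / p) * d1 p \<xi> \<eta>"
      using main[of \<xi> \<eta>] unfolding \<tau>_def by linarith
  next
    fix \<xi> \<eta> :: "(real ^ 'n) multiset"
    assume p1: "p = 1"
    have "\<tau> powr (1 / p) = \<tau>" using p1 \<tau>0 by simp
    then show "\<bar>nn_stat p \<xi> - nn_stat p \<eta>\<bar>
              \<le> (real (kissing_number TYPE(real ^ 'n)) + 1) * d1 p \<xi> \<eta>"
      using main[of \<xi> \<eta>] unfolding \<tau>_def by (simp add: add.commute)
  qed
qed

end
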